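(* If $H$ is a corona graph, then its 2-subdivision graph $S_2(H)$ (for any function $\alpha$) is a minimal DPDP-graph. In particular, $S_2(F\circ K_1)$ is a minimal DPDP-graph for every graph $F$.
   Context: Graphs are finite and may have multiple edges and loops. A leaf is a vertex of degree one. The corona $F\circ K_1$ of a graph $F$ is obtained from $F$ by adding a pendant edge (to a new leaf) at each vertex of $F$. A corona graph is a graph obtained from a graph $F$ by attaching at least one pendant edge to each vertex of $F$. A set $D\subseteq V(G)$ is dominating if every vertex outside $D$ has a neighbor in $D$; $P$ is paired-dominating if it is dominating and the subgraph induced by $P$ has a perfect matching. A DPDP-graph is a graph $G$ admitting disjoint sets $D,P$ with $V(G)=D\cup P$, $D$ dominating and $P$ paired-dominating; a minimal DPDP-graph is a DPDP-graph no proper spanning subgraph of which is a DPDP-graph. 2-subdivision graph: for a graph $H$ with no isolated vertex, set of leaves $L_H$, and $\alpha:L_H\to\mathbb{N}=\{1,2,\dots\}$, $S_2(H)$ has vertex set $(V_H\setminus L_H)\cup\{(v,i): v\in L_H, 1\le i\le \alpha(v)\}$ together with two new vertices for each edge $e$ of $H$ ($u_e,v_e$ if $e$ joins $u\ne v$; $v_e^1,v_e^2$ if $e$ is a loop at $v$). Its edges are: the edge joining the two new vertices of each $e$; for $v\in V_H\setminus L_H$, $vv_e$ for each non-loop edge $e$ at $v$ and $vv_e^1,vv_e^2$ for each loop $e$ at $v$; for $v\in L_H$ with incident edge $e$, the edges $v_e(v,i)$, $1\le i\le\alpha(v)$. *)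

theory Defs
  imports Main
begin

text \<open>Finite multigraphs with loops: each edge has a set of ends of size 1 (loop) or 2.\<close>

record ('v,'e) mgraph =
  verts :: "'v set"
  arcs  :: "'e set"
  ends  :: "'e \<Rightarrow> 'v set"

definition wf_graph :: "('v,'e) mgraph \<Rightarrow> bool" where
  "wf_graph G \<longleftrightarrow> finite (verts G) \<and> finite (arcs G) \<and>
     (\<forall>e\<in>arcs G. ends G e \<subseteq> verts G \<and> (card (ends G e) = 1 \<or> card (ends G e) = 2))"

definition degree :: "('v,'e) mgraph \<Rightarrow> 'v \<Rightarrow> nat" where
  "degree G v = card {e\<in>arcs G. v \<in> ends G e \<and> card (ends G e) = 2}
              + 2 * card {e\<in>arcs G. ends G e = {v}}"

definition leaves :: "('v,'e) mgraph \<Rightarrow> 'v set" where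
  "leaves G = {v\<in>verts G. degree G v = 1}"

definition adj :: "('v,'e) mgraph \<Rightarrow> 'v \<Rightarrow> 'v \<Rightarrow> bool" where
  "adj G u v \<longleftrightarrow> u \<noteq> v \<and> (\<exists>e\<in>arcs G. ends G e = {u, v})"

definition dominating :: "('v,'e) mgraph \<Rightarrow> 'v set \<Rightarrow> bool" where
  "dominating G D \<longleftrightarrow> D \<subseteq> verts G \<and> (\<forall>v\<in>verts G - D. \<exists>u\<in>D. adj G u v)"

definition has_perfect_matching_on :: "('v,'e) mgraph \<Rightarrow> 'v set \<Rightarrow> bool" where
  "has_perfect_matching_on G P \<longleftrightarrow> (\<exists>M \<subseteq> arcs G.
      (\<forall>e\<in>M. card (ends G e) = 2 \<and> ends G e \<subseteq> P) \<and>
      (\<forall>e\<in>M. \<forall>f\<in>M. e \<noteq> f \<longrightarrow> ends G e \<inter> ends G f = {}) \<and>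
      (\<forall>v\<in>P. \<exists>e\<in>M. v \<in> ends G e))"

definition paired_dominating :: "('v,'e) mgraph \<Rightarrow> 'v set \<Rightarrow> bool" where
  "paired_dominating G P \<longleftrightarrow> dominating G P \<and> has_perfect_matching_on G P"

definition dpdp_graph :: "('v,'e) mgraph \<Rightarrow> bool" where
  "dpdp_graph G \<longleftrightarrow> (\<exists>D P. D \<inter> P = {} \<and> verts G = D \<union> P \<and>
       dominating G D \<and> paired_dominating G P)"

definition minimal_dpdp_graph :: "('v,'e) mgraph \<Rightarrow> bool" where
  "minimal_dpdp_graph G \<longleftrightarrow> dpdp_graph G \<and>
     (\<forall>E'. E' \<subset> arcs G \<longrightarrow> \<not> dpdp_graph (G\<lparr>arcs := E'\<rparr>))"

text \<open>Corona graph: obtained from a graph F (on vertex set F) by attaching at least one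
  pendant edge to each vertex of F.\<close>
definition corona_graph :: "('v,'e) mgraph \<Rightarrow> bool" where
  "corona_graph H \<longleftrightarrow> wf_graph H \<and> (\<exists>F \<subseteq> verts H.
      (\<forall>v\<in>verts H - F. degree H v = 1 \<and> (\<exists>u\<in>F. adj H u v)) \<and>
      (\<forall>u\<in>F. \<exists>v\<in>verts H - F. adj H u v))"

definition corona_K1 :: "('v,'e) mgraph \<Rightarrow> ('v + 'v, 'e + 'v) mgraph" where
  "corona_K1 F = \<lparr> verts = Inl ` verts F \<union> Inr ` verts F,
                   arcs = Inl ` arcs F \<union> Inr ` verts F,
                   ends = (\<lambda>x. case x of Inl e \<Rightarrow> Inl ` ends F e
                                        | Inr v \<Rightarrow> {Inl v, Inr v}) \<rparr>"

text \<open>Vertices of the 2-subdivision graph: original non-leaf vertices, copies (v,i) of leaves,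
  the new vertices u_e of non-loop edges, and the new vertices v_e^1, v_e^2 of loops.\<close>
datatype ('v,'e) s2v = SV 'v | SL 'v nat | SE 'e 'v | SLp 'e nat

definition S2 :: "('v,'e) mgraph \<Rightarrow> ('v \<Rightarrow> nat) \<Rightarrow> (('v,'e) s2v, ('v,'e) s2v set) mgraph" where
  "S2 H \<alpha> = (let L = leaves H;
                 NL = {e\<in>arcs H. card (ends H e) = 2};
                 LP = {e\<in>arcs H. card (ends H e) = 1}
   in \<lparr> verts = SV ` (verts H - L)
              \<union> {SL v i | v i. v \<in> L \<and> 1 \<le> i \<and> i \<le> \<alpha> v}
              \<union> {SE e u | e u. e \<in> NL \<and> u \<in> ends H e}
              \<union> {SLp e i | e i. e \<in> LP \<and> (i = 1 \<or> i = 2)},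
        arcs = {SE e ` ends H e | e. e \<in> NL}
             \<union> {{SLp e 1, SLp e 2} | e. e \<in> LP}
             \<union> {{SV v, SE e v} | v e. v \<in> verts H - L \<and> e \<in> NL \<and> v \<in> ends H e}
             \<union> {{SV v, SLp e i} | v e i. v \<in> verts H - L \<and> e \<in> LP \<and> ends H e = {v}
                                        \<and> (i = 1 \<or> i = 2)}
             \<union> {{SE e v, SL v i} | v e i. v \<in> L \<and> e \<in> arcs H \<and> v \<in> ends H e
                                        \<and> 1 \<le> i \<and> i \<le> \<alpha> v},
        ends = id \<rparr>)"

end

theory Submission
  imports Defs
begin


lemma S2_verts: "verts (S2 H \<alpha>) = SV ` (verts H - leaves H)
              \<union> {SL v i | v i. v \<in> leaves H \<and> 1 \<le> i \<and> i \<le> \<alpha> v}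
              \<union> {SE e u | e u. e \<in> {e\<in>arcs H. card (ends H e) = 2} \<and> u \<in> ends H e}
              \<union> {SLp e i | e i. e \<in> {e\<in>arcs H. card (ends H e) = 1} \<and> (i = 1 \<or> i = 2)}"
  by (simp add: S2_def Let_def)

lemma S2_arcs: "arcs (S2 H \<alpha>) = {SE e ` ends H e | e. e \<in> {e\<in>arcs H. card (ends H e) = 2}}
             \<union> {{SLp e 1, SLp e 2} | e. e \<in> {e\<in>arcs H. card (ends H e) = 1}}
             \<union> {{SV v, SE e v} | v e. v \<in> verts H - leaves H \<and> e \<in> {e\<in>arcs H. card (ends H e) = 2} \<and> v \<in> ends H e}
             \<union> {{SV v, SLp e i} | v e i. v \<in> verts H - leaves H \<and> e \<in> {e\<in>arcs H. card (ends H e) = 1} \<and> ends H e = {v}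
                                        \<and> (i = 1 \<or> i = 2)}
             \<union> {{SE e v, SL v i} | v e i. v \<in> leaves H \<and> e \<in> arcs H \<and> v \<in> ends H e
                                        \<and> 1 \<le> i \<and> i \<le> \<alpha> v}"
  by (simp add: S2_def Let_def)

lemma S2_ends: "ends (S2 H \<alpha>) = id"
  by (simp add: S2_def Let_def)

lemma leaf_facts:
  assumes wf: "wf_graph H" and l: "l \<in> leaves H"
  shows "{e\<in>arcs H. ends H e = {l}} = {}" "card {e\<in>arcs H. l \<in> ends H e \<and> card (ends H e) = 2} = 1"
proof -
  have fin: "finite (arcs H)" using wf by (simp add: wf_graph_def)
  have d: "degree H l = 1" using l by (simp add: leaves_def)
  have c0: "card {e\<in>arcs H. ends H e = {l}} = 0" using d unfolding degree_def by arith
  then show "{e\<in>arcs H. ends H e = {l}} = {}" using fin by simp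
  show "card {e\<in>arcs H. l \<in> ends H e \<and> card (ends H e) = 2} = 1"
    using d c0 unfolding degree_def by arith
qed

lemma leaf_edge_card2:
  assumes wf: "wf_graph H" and l: "l \<in> leaves H" and e: "e \<in> arcs H" "l \<in> ends H e"
  shows "card (ends H e) = 2"
proof -
  have "card (ends H e) = 1 \<or> card (ends H e) = 2" using wf e by (auto simp: wf_graph_def)
  moreover have "card (ends H e) = 1 \<Longrightarrow> ends H e = {l}"
    using e(2) by (metis card_1_singletonE singletonD)
  ultimately show ?thesis using leaf_facts(1)[OF wf l] e by blast
qed

lemma leaf_edge_unique:
  assumes wf: "wf_graph H" and l: "l \<in> leaves H" and e: "e \<in> arcs H" "l \<in> ends H e"
    and e': "e' \<in> arcs H" "l \<in> ends H e'"
  shows "e = e'"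
proof -
  have "e \<in> {e\<in>arcs H. l \<in> ends H e \<and> card (ends H e) = 2}"
       "e' \<in> {e\<in>arcs H. l \<in> ends H e \<and> card (ends H e) = 2}"
    using leaf_edge_card2[OF wf l] e e' by auto
  then show ?thesis using leaf_facts(2)[OF wf l] by (metis card_1_singletonE singletonD)
qed

lemma leaf_edge_exists:
  assumes wf: "wf_graph H" and l: "l \<in> leaves H"
  obtains f x where "f \<in> arcs H" "ends H f = {x, l}" "x \<noteq> l"
proof -
  obtain f where "f \<in> {e\<in>arcs H. l \<in> ends H e \<and> card (ends H e) = 2}"
    using leaf_facts(2)[OF wf l] by (metis card_1_singletonE insertI1)
  then have "f \<in> arcs H" "l \<in> ends H f" "card (ends H f) = 2" by auto
  then obtain a b where ab: "ends H f = {a,b}" "a \<noteq> b" by (meson card_2_iff)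
  show ?thesis
  proof (cases "a = l")
    case True then show ?thesis using that[of f b] ab \<open>f \<in> arcs H\<close> by (auto simp: insert_commute)
  next
    case False then have "b = l" using ab \<open>l \<in> ends H f\<close> by auto
    then show ?thesis using that[of f a] ab \<open>f \<in> arcs H\<close> by auto
  qed
qed

lemma loop_not_leaf:
  assumes wf: "wf_graph H" and e: "e \<in> arcs H" "ends H e = {x}"
  shows "x \<notin> leaves H"
  using leaf_facts(1)[OF wf] e by auto

lemma corona_nonleaf:
  assumes c: "corona_graph H" and x: "x \<in> verts H" "x \<notin> leaves H"
  obtains l f where "l \<in> leaves H" "f \<in> arcs H" "ends H f = {x, l}" "x \<noteq> l"
proof -
  obtain F where F: "F \<subseteq> verts H" "\<forall>v\<in>verts H - F. degree H v = 1 \<and> (\<exists>u\<in>F. adj H u v)"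
     "\<forall>u\<in>F. \<exists>v\<in>verts H - F. adj H u v" using c by (auto simp: corona_graph_def)
  have "x \<in> F" using F x by (auto simp: leaves_def)
  then obtain v where "v \<in> verts H - F" "adj H x v" using F by blast
  then show ?thesis using that F by (auto simp: adj_def leaves_def)
qed




definition part :: "('v,'e) mgraph \<Rightarrow> 'v set \<Rightarrow> 'v set \<Rightarrow> bool" where
  "part G D P \<longleftrightarrow> D \<inter> P = {} \<and> verts G = D \<union> P \<and> dominating G D \<and> paired_dominating G P"

lemma adj_id: "ends G = id \<Longrightarrow> adj G u w \<longleftrightarrow> u \<noteq> w \<and> {u,w} \<in> arcs G"
  by (auto simp: adj_def)

lemma part_P_nbrD:
  assumes "ends G = id" "part G D P" "w \<in> P"
  shows "\<exists>u\<in>D. u \<noteq> w \<and> {u,w} \<in> arcs G"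
proof -
  have "w \<notin> D" using assms by (auto simp: part_def)
  then show ?thesis using assms unfolding part_def dominating_def adj_id[OF assms(1)] by blast
qed

lemma part_D_nbrP:
  assumes "ends G = id" "part G D P" "w \<in> D"
  shows "\<exists>u\<in>P. u \<noteq> w \<and> {u,w} \<in> arcs G"
proof -
  have "w \<notin> P" using assms by (auto simp: part_def)
  then show ?thesis using assms unfolding part_def paired_dominating_def dominating_def adj_id[OF assms(1)] by blast
qed

lemma part_P_nbrP:
  assumes "ends G = id" "part G D P" "w \<in> P"
  shows "\<exists>u\<in>P. u \<noteq> w \<and> {u,w} \<in> arcs G"
proof -
  obtain M where M: "M \<subseteq> arcs G" "\<forall>e\<in>M. card e = 2 \<and> e \<subseteq> P" "\<forall>v\<in>P. \<exists>e\<in>M. v \<in> e"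
    using assms by (auto simp: part_def paired_dominating_def has_perfect_matching_on_def)
  then obtain e where e: "e \<in> M" "w \<in> e" using assms(3) by blast
  then obtain a b where ab: "e = {a,b}" "a \<noteq> b" using M by (meson card_2_iff)
  show ?thesis
  proof (cases "a = w")
    case True then show ?thesis using ab e M by (intro bexI[of _ b]) (auto simp: insert_commute)
  next
    case False then have "b = w" using ab e by auto
    then show ?thesis using ab e M by (intro bexI[of _ a]) auto
  qed
qed

lemma part_pendant:
  assumes "ends G = id" "part G D P" "w \<in> verts G"
    and nb: "\<And>u. {u,w} \<in> arcs G \<Longrightarrow> u \<noteq> w \<Longrightarrow> u = s"
  shows "w \<in> D" "s \<in> P"
proof -
  have dis: "D \<inter> P = {}" and vv: "verts G = D \<union> P" using assms by (auto simp: part_def)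
  show wD: "w \<in> D"
  proof (rule ccontr)
    assume "w \<notin> D"
    then have wP: "w \<in> P" using vv assms(3) by auto
    obtain u where "u \<in> D" "u \<noteq> w" "{u,w} \<in> arcs G" using part_P_nbrD[OF assms(1,2) wP] by blast
    then have "s \<in> D" using nb by auto
    obtain u' where "u' \<in> P" "u' \<noteq> w" "{u',w} \<in> arcs G" using part_P_nbrP[OF assms(1,2) wP] by blast
    then have "s \<in> P" using nb by auto
    with \<open>s \<in> D\<close> dis show False by auto
  qed
  obtain u where "u \<in> P" "u \<noteq> w" "{u,w} \<in> arcs G" using part_D_nbrP[OF assms(1,2) wD] by blast
  then show "s \<in> P" using nb by auto
qed

lemma part_isolated:
  assumes "ends G = id" "part G D P" "w \<in> verts G"
    and nb: "\<And>u. {u,w} \<in> arcs G \<Longrightarrow> u \<noteq> w \<Longrightarrow> False"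
  shows False
proof -
  have "w \<in> D \<or> w \<in> P" using assms by (auto simp: part_def)
  then show False using part_D_nbrP[OF assms(1,2)] part_P_nbrD[OF assms(1,2)] nb by blast
qed

lemma nbr_SL:
  assumes wf: "wf_graph H" and l: "l \<in> leaves H" and f: "f \<in> arcs H" "l \<in> ends H f"
    and u: "{u, SL l i} \<in> arcs (S2 H \<alpha>)"
  shows "u = SE f l"
  using u leaf_edge_unique[OF wf l f] unfolding S2_arcs
  by (auto simp: doubleton_eq_iff)

lemma SE_img:
  assumes e: "ends H e = {v, y}" "v \<noteq> y" and eq: "{u, SE e v} = SE ea ` ends H ea"
  shows "u = SE e y"
proof -
  have "SE e v \<in> SE ea ` ends H ea" using eq by blast
  then have "ea = e" by auto
  then have eq2: "{u, SE e v} = {SE e v, SE e y}" using eq e by auto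
  then have "SE e y \<in> {u, SE e v}" by blast
  then show ?thesis using e(2) by auto
qed

lemma nbr_SE:
  assumes wf: "wf_graph H" and e: "e \<in> arcs H" "ends H e = {v, y}" "v \<noteq> y"
    and u: "{u, SE e v} \<in> arcs (S2 H \<alpha>)"
  shows "u = SE e y \<or> (v \<notin> leaves H \<and> u = SV v) \<or> (v \<in> leaves H \<and> (\<exists>i. u = SL v i \<and> 1 \<le> i \<and> i \<le> \<alpha> v))"
  using u e SE_img[OF e(2,3)] unfolding S2_arcs
  by (auto simp: doubleton_eq_iff)

lemma nbr_SLp:
  assumes wf: "wf_graph H" and e: "e \<in> arcs H" "ends H e = {x}"
    and u: "{u, SLp e i} \<in> arcs (S2 H \<alpha>)"
  shows "u = SLp e 1 \<or> u = SLp e 2 \<or> u = SV x"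
  using u e unfolding S2_arcs
  by (auto simp: doubleton_eq_iff)




lemma G'_simps: "ends (S2 H \<alpha>\<lparr>arcs := E'\<rparr>) = id" "verts (S2 H \<alpha>\<lparr>arcs := E'\<rparr>) = verts (S2 H \<alpha>)"
  "arcs (S2 H \<alpha>\<lparr>arcs := E'\<rparr>) = E'"
  by (simp_all add: S2_ends)

lemma lemA:
  assumes wf: "wf_graph H" and al: "\<forall>v\<in>leaves H. 1 \<le> \<alpha> v" and E': "E' \<subseteq> arcs (S2 H \<alpha>)"
    and pt: "part (S2 H \<alpha>\<lparr>arcs := E'\<rparr>) D P"
    and l: "l \<in> leaves H" and f: "f \<in> arcs H" "ends H f = {x, l}" "x \<noteq> l"
  shows "\<And>i. 1 \<le> i \<Longrightarrow> i \<le> \<alpha> l \<Longrightarrow> SL l i \<in> D" "SE f l \<in> P" "SE f x \<in> P"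
    "x \<notin> leaves H \<Longrightarrow> SV x \<in> D"
proof -
  note pe = part_pendant[OF G'_simps(1) pt, unfolded G'_simps]
  have dis: "D \<inter> P = {}" using pt by (simp add: part_def)
  have lf: "l \<in> ends H f" using f by auto
  show SLD: "SL l i \<in> D" if "1 \<le> i" "i \<le> \<alpha> l" for i
    using pe(1)[of "SL l i" "SE f l"] nbr_SL[OF wf l f(1) lf] E' that l
    unfolding S2_verts by blast
  show SEl: "SE f l \<in> P"
    using pe(2)[of "SL l 1" "SE f l"] nbr_SL[OF wf l f(1) lf] E' l al
    unfolding S2_verts by blast
  have f': "ends H f = {l, x}" "l \<noteq> x" using f by (auto simp: insert_commute)
  obtain u where u: "u \<in> P" "{u, SE f l} \<in> E'"
    using part_P_nbrP[OF G'_simps(1) pt SEl, unfolded G'_simps] by blast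
  from nbr_SE[OF wf f(1) f'] u E' have "u = SE f x \<or> (\<exists>i. u = SL l i \<and> 1 \<le> i \<and> i \<le> \<alpha> l)"
    using l by blast
  then show SEx: "SE f x \<in> P" using u SLD dis by blast
  obtain w where w: "w \<in> D" "{w, SE f x} \<in> E'"
    using part_P_nbrD[OF G'_simps(1) pt SEx, unfolded G'_simps] by blast
  from nbr_SE[OF wf f(1,2,3)] w E' have "w = SE f l \<or> (x \<notin> leaves H \<and> w = SV x) \<or> x \<in> leaves H"
    by blast
  then show "x \<notin> leaves H \<Longrightarrow> SV x \<in> D" using w SEl dis by blast
qed




lemma wf_ends: "wf_graph H \<Longrightarrow> e \<in> arcs H \<Longrightarrow> ends H e \<subseteq> verts H"
  by (auto simp: wf_graph_def)

lemma nonleaf_SVD: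
  assumes c: "corona_graph H" and al: "\<forall>v\<in>leaves H. 1 \<le> \<alpha> v" and E': "E' \<subseteq> arcs (S2 H \<alpha>)"
    and pt: "part (S2 H \<alpha>\<lparr>arcs := E'\<rparr>) D P" and x: "x \<in> verts H" "x \<notin> leaves H"
  shows "SV x \<in> D"
proof -
  have wf: "wf_graph H" using c by (simp add: corona_graph_def)
  obtain l f where "l \<in> leaves H" "f \<in> arcs H" "ends H f = {x, l}" "x \<noteq> l"
    using corona_nonleaf[OF c x] by blast
  then show ?thesis using lemA(4)[OF wf al E' pt] x by blast
qed

lemma case_leaf_edge:
  assumes c: "corona_graph H" and al: "\<forall>v\<in>leaves H. 1 \<le> \<alpha> v" and E': "E' \<subseteq> arcs (S2 H \<alpha>)"
    and pt: "part (S2 H \<alpha>\<lparr>arcs := E'\<rparr>) D P"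
    and e: "e \<in> arcs H" "ends H e = {x, y}" "x \<noteq> y" and xl: "x \<in> leaves H"
    and r: "{SE e x, SE e y} \<notin> E'"
  shows False
proof -
  have wf: "wf_graph H" using c by (simp add: corona_graph_def)
  have dis: "D \<inter> P = {}" using pt by (simp add: part_def)
  have e': "ends H e = {y, x}" "y \<noteq> x" using e by (auto simp: insert_commute)
  note A = lemA[OF wf al E' pt xl e(1) e']
  obtain u where u: "u \<in> P" "{u, SE e x} \<in> E'"
    using part_P_nbrP[OF G'_simps(1) pt A(2), unfolded G'_simps] by blast
  from nbr_SE[OF wf e] u E' have "u = SE e y \<or> (\<exists>i. u = SL x i \<and> 1 \<le> i \<and> i \<le> \<alpha> x)"
    using xl by blast
  then show False using u A(1) dis r by (auto simp: insert_commute)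
qed

lemma S2_arc_cases:
  assumes "r \<in> arcs (S2 H \<alpha>)"
  obtains (c1) e where "r = SE e ` ends H e" "e \<in> arcs H" "card (ends H e) = 2"
  | (c2) e where "r = {SLp e 1, SLp e 2}" "e \<in> arcs H" "card (ends H e) = 1"
  | (c3) v e where "r = {SV v, SE e v}" "v \<in> verts H - leaves H" "e \<in> arcs H" "card (ends H e) = 2" "v \<in> ends H e"
  | (c4) v e i where "r = {SV v, SLp e i}" "v \<in> verts H - leaves H" "e \<in> arcs H" "ends H e = {v}" "i = 1 \<or> i = 2"
  | (c5) v e i where "r = {SE e v, SL v i}" "v \<in> leaves H" "e \<in> arcs H" "v \<in> ends H e" "1 \<le> i" "i \<le> \<alpha> v"
  using assms unfolding S2_arcs Un_iff mem_Collect_eq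
  apply (elim disjE exE conjE)
  apply (metis c1)
  apply (metis c2)
  apply (metis c3)
  apply (metis c4)
  apply (metis c4)
  apply (metis c5)
  done

lemma SLp_in_verts: "e \<in> arcs H \<Longrightarrow> card (ends H e) = 1 \<Longrightarrow> i = 1 \<or> i = 2 \<Longrightarrow> SLp e i \<in> verts (S2 H \<alpha>)"
  unfolding S2_verts by blast

lemma SE_in_verts: "e \<in> arcs H \<Longrightarrow> card (ends H e) = 2 \<Longrightarrow> v \<in> ends H e \<Longrightarrow> SE e v \<in> verts (S2 H \<alpha>)"
  unfolding S2_verts by blast

lemma SL_in_verts: "v \<in> leaves H \<Longrightarrow> 1 \<le> i \<Longrightarrow> i \<le> \<alpha> v \<Longrightarrow> SL v i \<in> verts (S2 H \<alpha>)"
  unfolding S2_verts by blast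

lemma S2_min:
  assumes c: "corona_graph H" and al: "\<forall>v\<in>leaves H. 1 \<le> \<alpha> v" and E': "E' \<subset> arcs (S2 H \<alpha>)"
    and pt: "part (S2 H \<alpha>\<lparr>arcs := E'\<rparr>) D P"
  shows False
proof -
  have wf: "wf_graph H" using c by (simp add: corona_graph_def)
  have E's: "E' \<subseteq> arcs (S2 H \<alpha>)" using E' by auto
  have dis: "D \<inter> P = {}" using pt by (simp add: part_def)
  note pe = part_pendant[OF G'_simps(1) pt, unfolded G'_simps]
  note SVD = nonleaf_SVD[OF c al E's pt]
  note A = lemA[OF wf al E's pt]
  obtain r where r: "r \<in> arcs (S2 H \<alpha>)" "r \<notin> E'" using E' by blast
  from r(1) show False
  proof (cases rule: S2_arc_cases)
    case (c1 e)
    note re = c1(1) and e = c1(2,3)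
    obtain x y where xy: "ends H e = {x, y}" "x \<noteq> y" using e by (meson card_2_iff)
    have rr: "r = {SE e x, SE e y}" using re xy by auto
    have xyv: "x \<in> verts H" "y \<in> verts H" using wf_ends[OF wf e(1)] xy by auto
    show False
    proof (cases "x \<in> leaves H")
      case True then show ?thesis using case_leaf_edge[OF c al E's pt e(1) xy True] r rr by blast
    next
      case xnl: False
      show ?thesis
      proof (cases "y \<in> leaves H")
        case True
        have xy': "ends H e = {y, x}" "y \<noteq> x" using xy by (auto simp: insert_commute)
        have cm: "{SE e y, SE e x} = {SE e x, SE e y}" by (rule insert_commute)
        have "{SE e y, SE e x} \<notin> E'" using r(2) rr cm by metis
        then show ?thesis using case_leaf_edge[OF c al E's pt e(1) xy' True] by blast
      next
        case False
        have "SV x \<in> P"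
        proof (rule pe(2)[of "SE e x"])
          show "SE e x \<in> verts (S2 H \<alpha>)" using SE_in_verts[OF e, of x] xy by simp
          fix u assume "{u, SE e x} \<in> E'" "u \<noteq> SE e x"
          note uu = this
          have cm: "{SE e y, SE e x} = {SE e x, SE e y}" by (rule insert_commute)
          have "u = SE e y \<or> u = SV x" using nbr_SE[OF wf e(1) xy, of u \<alpha>] E's uu xnl by blast
          moreover have "u \<noteq> SE e y"
          proof
            assume "u = SE e y"
            then have "{SE e y, SE e x} \<in> E'" using uu(1) by simp
            then have "{SE e x, SE e y} \<in> E'" by (metis cm)
            then show False using r(2) rr by simp
          qed
          ultimately show "u = SV x" by blast
        qed
        then show False using SVD[OF xyv(1) xnl] dis by blast
      qed
    qed
  next
    case (c2 e)
    note rr = c2(1) and e = c2(2,3)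
    obtain x where x: "ends H e = {x}" using e by (meson card_1_singletonE)
    have xv: "x \<in> verts H" using wf_ends[OF wf e(1)] x by auto
    have xnl: "x \<notin> leaves H" using loop_not_leaf[OF wf e(1) x] .
    have "SV x \<in> P"
    proof (rule pe(2)[of "SLp e 1"])
      show "SLp e 1 \<in> verts (S2 H \<alpha>)" using SLp_in_verts[OF e, of 1] by simp
      fix u assume "{u, SLp e 1} \<in> E'" "u \<noteq> SLp e 1"
      note uu = this
      have cm: "{SLp e 2, SLp e 1} = {SLp e 1, SLp e 2}" by (rule insert_commute)
      have "u = SLp e 2 \<or> u = SV x" using nbr_SLp[OF wf e(1) x, of u 1 \<alpha>] E's uu by blast
      moreover have "u \<noteq> SLp e 2"
      proof
        assume "u = SLp e 2"
        then have "{SLp e 2, SLp e 1} \<in> E'" using uu(1) by simp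
        then have "{SLp e 1, SLp e 2} \<in> E'" by (metis cm)
        then show False using r(2) rr by simp
      qed
      ultimately show "u = SV x" by blast
    qed
    then show False using SVD[OF xv xnl] dis by blast
  next
    case (c3 v e)
    note rr = c3(1) and v = c3(2) and e = c3(3,4,5)
    obtain a b where ab: "ends H e = {a, b}" "a \<noteq> b" using e by (meson card_2_iff)
    obtain y where xy: "ends H e = {v, y}" "v \<noteq> y"
    proof (cases "a = v")
      case True then show ?thesis using that[of b] ab by blast
    next
      case False then have "b = v" using ab e(3) by auto
      then show ?thesis using that[of a] ab by (simp add: insert_commute)
    qed
    have xy': "ends H e = {y, v}" "y \<noteq> v" using xy by (auto simp: insert_commute)
    have yv: "y \<in> verts H" using wf_ends[OF wf e(1)] xy by auto
    have 1: "SE e v \<in> D" "SE e y \<in> P"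
    proof -
      have vv: "SE e v \<in> verts (S2 H \<alpha>)" using SE_in_verts[OF e] .
      have nb: "u = SE e y" if uu: "{u, SE e v} \<in> E'" "u \<noteq> SE e v" for u
      proof -
        have "u = SE e y \<or> u = SV v" using nbr_SE[OF wf e(1) xy, of u \<alpha>] E's uu v by blast
        moreover have "u \<noteq> SV v"
        proof
          assume "u = SV v"
          then have "{SV v, SE e v} \<in> E'" using uu(1) by simp
          then show False using r(2) rr by simp
        qed
        ultimately show ?thesis by blast
      qed
      show "SE e v \<in> D" by (rule pe(1)[OF vv nb])
      show "SE e y \<in> P" by (rule pe(2)[OF vv nb])
    qed
    obtain u where u: "u \<in> P" "{u, SE e y} \<in> E'"
      using part_P_nbrP[OF G'_simps(1) pt 1(2), unfolded G'_simps] by blast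
    from nbr_SE[OF wf e(1) xy'] u E's
    have "u = SE e v \<or> (y \<notin> leaves H \<and> u = SV y) \<or> (y \<in> leaves H \<and> (\<exists>i. u = SL y i \<and> 1 \<le> i \<and> i \<le> \<alpha> y))"
      by blast
    then show False
    proof (elim disjE conjE exE)
      assume "u = SE e v" then show False using 1 u dis by blast
    next
      assume "y \<notin> leaves H" "u = SV y" then show False using SVD[OF yv] u dis by blast
    next
      fix i assume "y \<in> leaves H" "u = SL y i" "1 \<le> i" "i \<le> \<alpha> y"
      then show False using A(1)[OF _ e(1) xy] u dis by blast
    qed
  next
    case (c4 v e i)
    note rr = c4(1) and v = c4(2) and e = c4(3,4) and i = c4(5)
    have vv: "v \<in> verts H" "v \<notin> leaves H" using v by auto
    define j :: nat where "j = (if i = 1 then 2 else 1)"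
    have ij: "i \<noteq> j" "SLp e 1 \<in> {SLp e i, SLp e j}" "SLp e 2 \<in> {SLp e i, SLp e j}" using i by (auto simp: j_def)
    have 1: "SLp e i \<in> D" "SLp e j \<in> P"
    proof -
      have c1e: "card (ends H e) = 1" using e(2) by simp
      have vt: "SLp e i \<in> verts (S2 H \<alpha>)" using SLp_in_verts[OF e(1) c1e i] .
      have nb: "u = SLp e j" if uu: "{u, SLp e i} \<in> E'" "u \<noteq> SLp e i" for u
      proof -
        have "{u, SLp e i} \<in> arcs (S2 H \<alpha>)" using uu E's by blast
        then have "u = SLp e 1 \<or> u = SLp e 2 \<or> u = SV v" by (rule nbr_SLp[OF wf e(1,2)])
        then have "u \<in> {SLp e i, SLp e j} \<or> u = SV v" using ij by auto
        moreover have "u \<noteq> SV v"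
        proof
          assume "u = SV v"
          then have "{SV v, SLp e i} \<in> E'" using uu(1) by simp
          then show False using r(2) rr by simp
        qed
        ultimately show ?thesis using uu(2) by blast
      qed
      show "SLp e i \<in> D" by (rule pe(1)[OF vt nb])
      show "SLp e j \<in> P" by (rule pe(2)[OF vt nb])
    qed
    obtain u where u: "u \<in> P" "u \<noteq> SLp e j" "{u, SLp e j} \<in> E'"
      using part_P_nbrP[OF G'_simps(1) pt 1(2), unfolded G'_simps] by blast
    have "{u, SLp e j} \<in> arcs (S2 H \<alpha>)" using u E's by blast
    then have "u = SLp e 1 \<or> u = SLp e 2 \<or> u = SV v" by (rule nbr_SLp[OF wf e(1,2)])
    then have "u \<in> {SLp e i, SLp e j} \<or> u = SV v" using ij by auto
    then have "u = SLp e i \<or> u = SV v" using u(2) by blast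
    moreover have "SV v \<in> D" using SVD[OF vv] .
    ultimately show False using 1 u(1) dis by blast
  next
    case (c5 v e i)
    note rr = c5(1) and v = c5(2) and e = c5(3,4) and i = c5(5,6)
    show False
    proof (rule part_isolated[OF G'_simps(1) pt, of "SL v i", unfolded G'_simps])
      show "SL v i \<in> verts (S2 H \<alpha>)" using v i by (rule SL_in_verts)
      fix u assume uu: "{u, SL v i} \<in> E'" "u \<noteq> SL v i"
      then have "u = SE e v" using nbr_SL[OF wf v e, of u i \<alpha>] E's by blast
      then show False using uu(1) r(2) rr by simp
    qed
  qed
qed


lemma arc1: "e \<in> arcs H \<Longrightarrow> card (ends H e) = 2 \<Longrightarrow> SE e ` ends H e \<in> arcs (S2 H \<alpha>)"
  unfolding S2_arcs by (rule UnI1, rule UnI1, rule UnI1, rule UnI1) (intro CollectI exI conjI refl; simp)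
lemma arc2: "e \<in> arcs H \<Longrightarrow> card (ends H e) = 1 \<Longrightarrow> {SLp e 1, SLp e 2} \<in> arcs (S2 H \<alpha>)"
  unfolding S2_arcs by (rule UnI1, rule UnI1, rule UnI1, rule UnI2) (intro CollectI exI conjI refl; simp)
lemma arc3: "v \<in> verts H \<Longrightarrow> v \<notin> leaves H \<Longrightarrow> e \<in> arcs H \<Longrightarrow> card (ends H e) = 2 \<Longrightarrow> v \<in> ends H e
   \<Longrightarrow> {SV v, SE e v} \<in> arcs (S2 H \<alpha>)"
  unfolding S2_arcs by (rule UnI1, rule UnI1, rule UnI2) (intro CollectI exI conjI refl; simp)
lemma arc4: "v \<in> verts H \<Longrightarrow> v \<notin> leaves H \<Longrightarrow> e \<in> arcs H \<Longrightarrow> ends H e = {v} \<Longrightarrow> i = 1 \<or> i = 2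
   \<Longrightarrow> {SV v, SLp e i} \<in> arcs (S2 H \<alpha>)"
  unfolding S2_arcs by (rule UnI1, rule UnI2) (intro CollectI exI conjI refl; simp)
lemma arc5: "v \<in> leaves H \<Longrightarrow> e \<in> arcs H \<Longrightarrow> v \<in> ends H e \<Longrightarrow> 1 \<le> i \<Longrightarrow> i \<le> \<alpha> v
   \<Longrightarrow> {SE e v, SL v i} \<in> arcs (S2 H \<alpha>)"
  unfolding S2_arcs by (rule UnI2) (intro CollectI exI conjI refl; simp)




definition MM :: "('v,'e) mgraph \<Rightarrow> ('v,'e) s2v set set" where
  "MM H = {SE e ` ends H e | e. e \<in> arcs H \<and> card (ends H e) = 2}
                      \<union> {{SLp e 1, SLp e 2} | e. e \<in> arcs H \<and> card (ends H e) = 1}"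
definition PP :: "('v,'e) mgraph \<Rightarrow> ('v,'e) s2v set" where
  "PP H = {SE e u | e u. e \<in> {e\<in>arcs H. card (ends H e) = 2} \<and> u \<in> ends H e}
              \<union> {SLp e i | e i. e \<in> {e\<in>arcs H. card (ends H e) = 1} \<and> (i = 1 \<or> i = 2)}"

lemma MM_cases:
  assumes "a \<in> MM H"
  obtains (a1) e where "a = SE e ` ends H e" "e \<in> arcs H" "card (ends H e) = 2"
      | (a2) e where "a = {SLp e 1, SLp e 2}" "e \<in> arcs H" "card (ends H e) = 1"
  using assms unfolding MM_def by blast

lemma MM_sub: "MM H \<subseteq> arcs (S2 H \<alpha>)"
proof
  fix a assume "a \<in> MM H"
  then show "a \<in> arcs (S2 H \<alpha>)"
  proof (rule MM_cases)
    fix e assume "a = SE e ` ends H e" "e \<in> arcs H" "card (ends H e) = 2"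
    then show ?thesis using arc1[of e H \<alpha>] by simp
  next
    fix e assume "a = {SLp e 1, SLp e 2}" "e \<in> arcs H" "card (ends H e) = 1"
    then show ?thesis using arc2[of e H \<alpha>] by simp
  qed
qed

lemma MM_card: assumes "a \<in> MM H" shows "card a = 2"
  using assms
proof (rule MM_cases)
  fix e assume a1: "a = SE e ` ends H e" "e \<in> arcs H" "card (ends H e) = 2"
  have "inj_on (SE e) (ends H e)" by (auto simp: inj_on_def)
  then show ?thesis using a1 by (simp add: card_image)
next
  fix e assume "a = {SLp e 1, SLp e 2}" "e \<in> arcs H" "card (ends H e) = 1"
  then show ?thesis by simp
qed

lemma MM_P: assumes "a \<in> MM H" shows "a \<subseteq> PP H"
  using assms
proof (rule MM_cases)
  fix e assume a1: "a = SE e ` ends H e" "e \<in> arcs H" "card (ends H e) = 2"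
  show ?thesis
  proof
    fix x assume "x \<in> a"
    then obtain u where "u \<in> ends H e" "x = SE e u" using a1 by blast
    then show "x \<in> PP H" unfolding PP_def using a1 by blast
  qed
next
  fix e assume a2: "a = {SLp e 1, SLp e 2}" "e \<in> arcs H" "card (ends H e) = 1"
  show ?thesis
  proof
    fix x assume "x \<in> a"
    then obtain i where "i = 1 \<or> i = 2" "x = SLp e i" using a2 by blast
    then show "x \<in> PP H" unfolding PP_def using a2 by blast
  qed
qed

lemma MM_cover: "v \<in> PP H \<Longrightarrow> \<exists>a\<in>MM H. v \<in> a"
proof -
  assume "v \<in> PP H"
  then consider (se) e u where "v = SE e u" "e \<in> arcs H" "card (ends H e) = 2" "u \<in> ends H e"
      | (slp) e i where "v = SLp e i" "e \<in> arcs H" "card (ends H e) = 1" "i = 1 \<or> i = 2"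
      unfolding PP_def by blast
  then show ?thesis
  proof cases
    case se
    have "SE e ` ends H e \<in> MM H" unfolding MM_def using se(2,3) by blast
    moreover have "v \<in> SE e ` ends H e" using se by blast
    ultimately show ?thesis by blast
  next
    case slp
    have "{SLp e 1, SLp e 2} \<in> MM H" unfolding MM_def using slp(2,3) by blast
    moreover have "v \<in> {SLp e 1, SLp e 2}" using slp by auto
    ultimately show ?thesis by blast
  qed
qed


lemma MM_disj:
  assumes ab: "a \<in> MM H" "b \<in> MM H" "a \<noteq> b" shows "a \<inter> b = {}"
proof -
  have d1: "e \<noteq> e' \<Longrightarrow> SE e ` A \<inter> SE e' ` B = {}" for e e' :: 'e and A B :: "'v set" by auto
  have d2: "SE e ` A \<inter> {SLp e' 1, SLp e' 2} = {}" "{SLp e' 1, SLp e' 2} \<inter> SE e ` A = {}"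
    for e e' :: 'e and A :: "'v set" by auto
  have d3: "e \<noteq> e' \<Longrightarrow> {SLp e 1, SLp e 2} \<inter> {SLp e' (1::nat), SLp e' 2} = ({} :: ('v,'e) s2v set)" for e e' :: 'e
    by auto
  from ab(1) show ?thesis
  proof (rule MM_cases)
    fix e assume a: "a = SE e ` ends H e"
    from ab(2) show ?thesis
    proof (rule MM_cases)
      fix e' assume b: "b = SE e' ` ends H e'"
      have "e \<noteq> e'"
      proof
        assume "e = e'" then show False using a b ab(3) by simp
      qed
      then show ?thesis unfolding a b by (rule d1)
    next
      fix e' assume b: "b = {SLp e' 1, SLp e' 2}"
      show ?thesis unfolding a b by (rule d2(1))
    qed
  next
    fix e assume a: "a = {SLp e 1, SLp e 2}"
    from ab(2) show ?thesis
    proof (rule MM_cases)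
      fix e' assume b: "b = SE e' ` ends H e'"
      show ?thesis unfolding a b by (rule d2(2))
    next
      fix e' assume b: "b = {SLp e' 1, SLp e' 2}"
      have "e \<noteq> e'"
      proof
        assume "e = e'" then show False using a b ab(3) by simp
      qed
      then show ?thesis unfolding a b by (rule d3)
    qed
  qed
qed

lemma MM_pm: "has_perfect_matching_on (S2 H \<alpha>) (PP H)"
  unfolding has_perfect_matching_on_def S2_ends id_apply
proof (intro exI[of _ "MM H"] conjI ballI impI)
  show "MM H \<subseteq> arcs (S2 H \<alpha>)" by (rule MM_sub)
  fix a assume "a \<in> MM H"
  then show "card a = 2" "a \<subseteq> PP H" by (rule MM_card, rule MM_P)
next
  fix a b assume "a \<in> MM H" "b \<in> MM H" "a \<noteq> b"
  then show "a \<inter> b = {}" by (rule MM_disj)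
next
  fix v assume "v \<in> PP H"
  then show "\<exists>a\<in>MM H. v \<in> a" by (rule MM_cover)
qed




lemma S2_dpdp:
  fixes H :: "('v,'e) mgraph"
  assumes c: "corona_graph H" and al: "\<forall>v\<in>leaves H. 1 \<le> \<alpha> v"
  shows "dpdp_graph (S2 H \<alpha>)"
proof -
  have wf: "wf_graph H" using c by (simp add: corona_graph_def)
  define D0 :: "('v,'e) s2v set" where "D0 = SV ` (verts H - leaves H) \<union> {SL v i | v i. v \<in> leaves H \<and> 1 \<le> i \<and> i \<le> \<alpha> v}"
  define P0 :: "('v,'e) s2v set" where "P0 = {SE e u | e u. e \<in> {e\<in>arcs H. card (ends H e) = 2} \<and> u \<in> ends H e}
              \<union> {SLp e i | e i. e \<in> {e\<in>arcs H. card (ends H e) = 1} \<and> (i = 1 \<or> i = 2)}"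
  have adj: "\<And>u w. adj (S2 H \<alpha>) u w \<longleftrightarrow> u \<noteq> w \<and> {u,w} \<in> arcs (S2 H \<alpha>)"
    by (rule adj_id[OF S2_ends])
  have dis: "D0 \<inter> P0 = {}" unfolding D0_def P0_def by auto
  have vv: "verts (S2 H \<alpha>) = D0 \<union> P0" unfolding D0_def P0_def S2_verts by (simp only: Un_assoc)
  have domD: "dominating (S2 H \<alpha>) D0"
    unfolding dominating_def
  proof (intro conjI ballI)
    show "D0 \<subseteq> verts (S2 H \<alpha>)" using vv by blast
    fix w assume "w \<in> verts (S2 H \<alpha>) - D0"
    then have "w \<in> P0" using vv by blast
    then consider (se) e u where "w = SE e u" "e \<in> arcs H" "card (ends H e) = 2" "u \<in> ends H e"
      | (slp) e i where "w = SLp e i" "e \<in> arcs H" "card (ends H e) = 1" "i = 1 \<or> i = 2"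
      unfolding P0_def by blast
    then show "\<exists>u\<in>D0. adj (S2 H \<alpha>) u w"
    proof cases
      case se
      have uv: "u \<in> verts H" using wf_ends[OF wf se(2)] se(4) by blast
      show ?thesis
      proof (cases "u \<in> leaves H")
        case True
        have a1: "1 \<le> \<alpha> u" using al True by blast
        have "{SE e u, SL u 1} \<in> arcs (S2 H \<alpha>)" using arc5[of u H e 1 \<alpha>] True se(2) se(4) a1 by simp
        then have "{SL u 1, SE e u} \<in> arcs (S2 H \<alpha>)" by (metis insert_commute)
        moreover have "SL u 1 \<in> D0" unfolding D0_def using True a1 by blast
        ultimately show ?thesis using se(1) adj by auto
      next
        case False
        have "{SV u, SE e u} \<in> arcs (S2 H \<alpha>)" using arc3[OF uv False se(2) se(3) se(4)] .
        moreover have "SV u \<in> D0" unfolding D0_def using uv False by blast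
        ultimately show ?thesis using se(1) adj by auto
      qed
    next
      case slp
      obtain x where x: "ends H e = {x}" using slp(3) by (meson card_1_singletonE)
      have xv: "x \<in> verts H" using wf_ends[OF wf slp(2)] x by blast
      have xnl: "x \<notin> leaves H" using loop_not_leaf[OF wf slp(2) x] .
      have "{SV x, SLp e i} \<in> arcs (S2 H \<alpha>)" using arc4[OF xv xnl slp(2) x slp(4)] .
      moreover have "SV x \<in> D0" unfolding D0_def using xv xnl by blast
      ultimately show ?thesis using slp(1) adj by auto
    qed
  qed
  have domP: "dominating (S2 H \<alpha>) P0"
    unfolding dominating_def
  proof (intro conjI ballI)
    show "P0 \<subseteq> verts (S2 H \<alpha>)" using vv by blast
    fix w assume "w \<in> verts (S2 H \<alpha>) - P0"
    then have "w \<in> D0" using vv dis by blast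
    then consider (sv) x where "w = SV x" "x \<in> verts H" "x \<notin> leaves H"
      | (sl) v i where "w = SL v i" "v \<in> leaves H" "1 \<le> i" "i \<le> \<alpha> v"
      unfolding D0_def by blast
    then show "\<exists>u\<in>P0. adj (S2 H \<alpha>) u w"
    proof cases
      case sv
      obtain l f where lf: "l \<in> leaves H" "f \<in> arcs H" "ends H f = {x, l}" "x \<noteq> l"
        using corona_nonleaf[OF c sv(2,3)] by blast
      have c2: "card (ends H f) = 2" using lf by simp
      have xf: "x \<in> ends H f" using lf by simp
      have "{SV x, SE f x} \<in> arcs (S2 H \<alpha>)" using arc3[OF sv(2,3) lf(2) c2 xf] .
      then have "{SE f x, SV x} \<in> arcs (S2 H \<alpha>)" by (metis insert_commute)
      moreover have "SE f x \<in> P0" unfolding P0_def using lf(2) c2 xf by blast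
      ultimately show ?thesis using sv(1) adj by auto
    next
      case sl
      obtain f x where f: "f \<in> arcs H" "ends H f = {x, v}" "x \<noteq> v"
        using leaf_edge_exists[OF wf sl(2)] by blast
      have c2: "card (ends H f) = 2" using f by simp
      have vf: "v \<in> ends H f" using f by simp
      have "{SE f v, SL v i} \<in> arcs (S2 H \<alpha>)" using arc5[of v H f i \<alpha>] sl(2) f(1) vf sl(3,4) by simp
      moreover have "SE f v \<in> P0" unfolding P0_def using f(1) c2 vf by blast
      ultimately show ?thesis using sl(1) adj by auto
    qed
  qed
  have P0eq: "P0 = PP H" unfolding P0_def PP_def by (rule refl)
  have pm: "has_perfect_matching_on (S2 H \<alpha>) P0" unfolding P0eq by (rule MM_pm)
  have pd: "paired_dominating (S2 H \<alpha>) P0" unfolding paired_dominating_def using domP pm by blast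
  show ?thesis unfolding dpdp_graph_def
    by (rule exI[of _ D0], rule exI[of _ P0]) (use dis vv domD pd in blast)
qed




lemma K1_simps: "verts (corona_K1 F) = Inl ` verts F \<union> Inr ` verts F"
  "arcs (corona_K1 F) = Inl ` arcs F \<union> Inr ` verts F"
  "ends (corona_K1 F) (Inl e) = Inl ` ends F e"
  "ends (corona_K1 F) (Inr v) = {Inl v, Inr v}"
  by (simp_all add: corona_K1_def)

lemma K1_wf: fixes F :: "('a,'b) mgraph" assumes wf: "wf_graph F" shows "wf_graph (corona_K1 F)"
proof -
  have f: "finite (verts (corona_K1 F))" "finite (arcs (corona_K1 F))"
    using wf by (simp_all add: K1_simps wf_graph_def)
  have "ends (corona_K1 F) x \<subseteq> verts (corona_K1 F) \<and>
        (card (ends (corona_K1 F) x) = 1 \<or> card (ends (corona_K1 F) x) = 2)"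
    if x: "x \<in> arcs (corona_K1 F)" for x
  proof (cases x)
    case (Inl e)
    then have e: "e \<in> arcs F" using x by (auto simp: K1_simps)
    have "card (Inl ` ends F e :: ('a + 'a) set) = card (ends F e)" by (rule card_image) simp
    then show ?thesis using wf e unfolding Inl wf_graph_def K1_simps by auto
  next
    case (Inr v)
    then have "v \<in> verts F" using x by (auto simp: K1_simps)
    then show ?thesis using Inr by (simp add: K1_simps)
  qed
  then show ?thesis unfolding wf_graph_def using f by blast
qed

lemma K1_corona: fixes F :: "('a,'b) mgraph" assumes wf: "wf_graph F" shows "corona_graph (corona_K1 F)"
  unfolding corona_graph_def
proof (intro conjI exI[of _ "Inl ` verts F"] ballI)
  show "wf_graph (corona_K1 F)" using K1_wf[OF wf] .
  show "Inl ` verts F \<subseteq> verts (corona_K1 F)" by (simp add: K1_simps)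
  have adjw: "adj (corona_K1 F) (Inl w) (Inr w)" if "w \<in> verts F" for w
    unfolding adj_def using that by (intro conjI bexI[of _ "Inr w"]) (auto simp: K1_simps)
  fix v assume v: "v \<in> verts (corona_K1 F) - Inl ` verts F"
  then obtain w where w: "v = Inr w" "w \<in> verts F" by (auto simp: K1_simps)
  have s1: "{e \<in> arcs (corona_K1 F). v \<in> ends (corona_K1 F) e \<and> card (ends (corona_K1 F) e) = 2} = {Inr w}"
  proof (rule set_eqI, rule iffI)
    fix e assume "e \<in> {e \<in> arcs (corona_K1 F). v \<in> ends (corona_K1 F) e \<and> card (ends (corona_K1 F) e) = 2}"
    then have "e \<in> arcs (corona_K1 F)" "Inr w \<in> ends (corona_K1 F) e" using w by auto
    then show "e \<in> {Inr w}" by (cases e) (auto simp: K1_simps)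
  next
    fix e assume "e \<in> {Inr w :: 'b + 'a}"
    then show "e \<in> {e \<in> arcs (corona_K1 F). v \<in> ends (corona_K1 F) e \<and> card (ends (corona_K1 F) e) = 2}"
      using w by (auto simp: K1_simps)
  qed
  have s2: "{e \<in> arcs (corona_K1 F). ends (corona_K1 F) e = {v}} = {}"
  proof -
    have "ends (corona_K1 F) e \<noteq> {Inr w}" for e
    proof (cases e)
      case (Inl a) then show ?thesis by (auto simp: K1_simps)
    next
      case (Inr b) then show ?thesis by (auto simp: K1_simps)
    qed
    then show ?thesis using w by auto
  qed
  show "degree (corona_K1 F) v = 1"
    unfolding degree_def s1 s2 by simp
  show "\<exists>u\<in>Inl ` verts F. adj (corona_K1 F) u v"
    using adjw[OF w(2)] w by auto
next
  fix u :: "'a + 'a" assume "u \<in> Inl ` verts F"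
  then obtain w where w: "u = Inl w" "w \<in> verts F" by auto
  have adjw: "adj (corona_K1 F) (Inl w) (Inr w)"
    unfolding adj_def using w by (intro conjI bexI[of _ "Inr w"]) (auto simp: K1_simps)
  moreover have "Inr w \<in> verts (corona_K1 F) - Inl ` verts F" using w by (auto simp: K1_simps)
  ultimately show "\<exists>v\<in>verts (corona_K1 F) - Inl ` verts F. adj (corona_K1 F) u v" using w by blast
qed


lemma S2_minimal:
  fixes H :: "('v,'e) mgraph"
  assumes c: "corona_graph H" and al: "\<forall>v\<in>leaves H. 1 \<le> \<alpha> v"
  shows "minimal_dpdp_graph (S2 H \<alpha>)"
  unfolding minimal_dpdp_graph_def
proof (intro conjI allI impI)
  show "dpdp_graph (S2 H \<alpha>)" by (rule S2_dpdp[OF c al])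
  fix E' assume E': "E' \<subset> arcs (S2 H \<alpha>)"
  show "\<not> dpdp_graph (S2 H \<alpha>\<lparr>arcs := E'\<rparr>)"
  proof
    assume "dpdp_graph (S2 H \<alpha>\<lparr>arcs := E'\<rparr>)"
    then obtain D P where "part (S2 H \<alpha>\<lparr>arcs := E'\<rparr>) D P"
      unfolding dpdp_graph_def part_def by blast
    then show False by (rule S2_min[OF c al E'])
  qed
qed

theorem corollary6p3:
  fixes H :: "('v,'e) mgraph" and \<alpha> :: "'v \<Rightarrow> nat"
  shows "(corona_graph H \<and> (\<forall>v\<in>leaves H. 1 \<le> \<alpha> v) \<longrightarrow> minimal_dpdp_graph (S2 H \<alpha>))
       \<and> (\<forall>(F :: ('a,'b) mgraph) (\<beta> :: 'a + 'a \<Rightarrow> nat).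
            wf_graph F \<and> (\<forall>v\<in>leaves (corona_K1 F). 1 \<le> \<beta> v)
            \<longrightarrow> minimal_dpdp_graph (S2 (corona_K1 F) \<beta>))"
proof (intro conjI allI impI)
  assume "corona_graph H \<and> (\<forall>v\<in>leaves H. 1 \<le> \<alpha> v)"
  then show "minimal_dpdp_graph (S2 H \<alpha>)" using S2_minimal by blast
next
  fix F :: "('a,'b) mgraph" and \<beta> :: "'a + 'a \<Rightarrow> nat"
  assume a: "wf_graph F \<and> (\<forall>v\<in>leaves (corona_K1 F). 1 \<le> \<beta> v)"
  then have "corona_graph (corona_K1 F)" using K1_corona by blast
  then show "minimal_dpdp_graph (S2 (corona_K1 F) \<beta>)" using S2_minimal a by blast
qed

end
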